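(* Let $0<p<1-1/e^2$ be constant, $b=\frac1{1-p}$, and $\gamma(n)=2\log_b n-2\log_b\log_b n-2\log_b 2$. Let $k=k(n)$ be positive integers with $\frac nk-\gamma(n)=O(1)$. Then, as $n\to\infty$, \[\frac{\mu_{n+1,k}}{\mu_{n,k}}=\Theta\left(\frac{\log n}{n}\right).\]
   Context: For $n\in\mathbb{N}$ let $m(n)=\lfloor p\binom n2\rfloor$ and let $X_{n,k}$ be the number of ordered $k$-equipartitions of $[n]$ all of whose parts are independent sets in $G\sim\mathcal{G}(n,m(n))$ (the uniform random graph on $n$ labelled vertices with exactly $m(n)$ edges); here an ordered $k$-equipartition of $[n]$ is an ordered partition into $k$ parts each of size $\lceil n/k\rceil$ or $\lfloor n/k\rfloor$, the larger parts listed first. Let $\mu_{n,k}=\mathbb{E}[X_{n,k}]$; note $\mu_{n+1,k}$ refers to $\mathcal{G}(n+1,m(n+1))$. *)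

theory Defs
  imports "HOL-Probability.Probability" "HOL-Library.Landau_Symbols"
begin

text \<open>Vertex set [n] is rendered as {0..<n}. A graph on [n] is its edge set,
a set of 2-element subsets of {0..<n}.\<close>

definition all_pairs :: "nat \<Rightarrow> nat set set" where
  "all_pairs n = {e. e \<subseteq> {0..<n} \<and> card e = 2}"

definition graphs_nm :: "nat \<Rightarrow> nat \<Rightarrow> nat set set set" where
  "graphs_nm n m = {E. E \<subseteq> all_pairs n \<and> card E = m}"

definition m_edges :: "real \<Rightarrow> nat \<Rightarrow> nat" where
  "m_edges p n = nat \<lfloor>p * real (n choose 2)\<rfloor>"

text \<open>Ordered k-equipartition of [n]: part index function f : [n] \<rightarrow> {0..<k};
part i has size ceil(n/k) for i < n mod k (larger parts first), floor(n/k) otherwise.\<close>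
definition equipartitions :: "nat \<Rightarrow> nat \<Rightarrow> (nat \<Rightarrow> nat) set" where
  "equipartitions n k = {f. (\<forall>v. v \<notin> {0..<n} \<longrightarrow> f v = 0) \<and> f ` {0..<n} \<subseteq> {0..<k} \<and>
     (\<forall>i<k. card {v\<in>{0..<n}. f v = i} = (if i < n mod k then n div k + 1 else n div k))}"

definition parts_independent :: "nat set set \<Rightarrow> (nat \<Rightarrow> nat) \<Rightarrow> bool" where
  "parts_independent E f \<longleftrightarrow> (\<forall>u v. {u, v} \<in> E \<longrightarrow> f u \<noteq> f v)"

definition X_count :: "nat \<Rightarrow> nat \<Rightarrow> nat set set \<Rightarrow> nat" where
  "X_count n k E = card {f \<in> equipartitions n k. parts_independent E f}"

definition mu :: "real \<Rightarrow> nat \<Rightarrow> nat \<Rightarrow> real" where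
  "mu p n k = measure_pmf.expectation (pmf_of_set (graphs_nm n (m_edges p n)))
                (\<lambda>E. real (X_count n k E))"

definition gamma_fn :: "real \<Rightarrow> nat \<Rightarrow> real" where
  "gamma_fn p n = (let b = 1 / (1 - p) in
     2 * log b (real n) - 2 * log b (log b (real n)) - 2 * log b 2)"

end

theory Submission
  imports Defs "HOL-Real_Asymp.Real_Asymp"
begin



definition cnt :: "nat \<Rightarrow> (nat \<Rightarrow> nat) \<Rightarrow> nat \<Rightarrow> nat" where
  "cnt n f i = card {v\<in>{0..<n}. f v = i}"

definition sz :: "nat \<Rightarrow> nat \<Rightarrow> nat \<Rightarrow> nat" where
  "sz n k i = (if i < n mod k then n div k + 1 else n div k)"

definition NN :: "nat \<Rightarrow> nat \<Rightarrow> nat" where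
  "NN n k = (\<Sum>i<k. sz n k i choose 2)"

definition monoP :: "nat \<Rightarrow> (nat \<Rightarrow> nat) \<Rightarrow> nat set set" where
  "monoP n f = {e \<in> all_pairs n. \<forall>u\<in>e. \<forall>v\<in>e. f u = f v}"

lemma EP_iff: "f \<in> equipartitions n k \<longleftrightarrow> (\<forall>v. v \<ge> n \<longrightarrow> f v = 0) \<and> (\<forall>v<n. f v < k) \<and> (\<forall>i<k. cnt n f i = sz n k i)"
  unfolding equipartitions_def cnt_def sz_def image_subset_iff atLeastLessThan_iff by (auto simp: not_le)

lemma finite_EP: "finite (equipartitions n k)"
proof -
  have "equipartitions n k \<subseteq> {f. \<forall>x. (x \<in> {0..<n} \<longrightarrow> f x \<in> {0..<k}) \<and> (x \<notin> {0..<n} \<longrightarrow> f x = 0)}"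
    by (auto simp: EP_iff)
  moreover have "finite {f. \<forall>x. (x \<in> {0..<n} \<longrightarrow> f x \<in> {0..<k}) \<and> (x \<notin> {0..<n} \<longrightarrow> f x = (0::nat))}"
    by (rule finite_set_of_finite_funs) auto
  ultimately show ?thesis by (rule finite_subset)
qed

lemma card_all_pairs: "card (all_pairs n) = n choose 2"
  unfolding all_pairs_def using n_subsets[of "{0..<n}" 2] by simp

lemma finite_all_pairs: "finite (all_pairs n)"
  unfolding all_pairs_def by auto



lemma mono_sub: "monoP n f \<subseteq> all_pairs n"
  unfolding monoP_def by auto

lemma card_mono:
  assumes "f \<in> equipartitions n k"
  shows "card (monoP n f) = NN n k"
proof -
  let ?P = "\<lambda>i. {v\<in>{0..<n}. f v = i}"
  have eq: "monoP n f = (\<Union>i\<in>{..<k}. {e. e \<subseteq> ?P i \<and> card e = 2})"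
  proof (intro equalityI subsetI)
    fix e assume e: "e \<in> monoP n f"
    then have sub: "e \<subseteq> {0..<n}" and c: "card e = 2" and m: "\<forall>u\<in>e. \<forall>v\<in>e. f u = f v"
      unfolding monoP_def all_pairs_def by blast+
    from c obtain u w where "e = {u,w}" unfolding card_2_iff by blast
    then have u: "u \<in> e" by simp
    have "f u < k" using assms sub u by (auto simp: EP_iff)
    moreover have "e \<subseteq> ?P (f u)" using sub m u by blast
    ultimately show "e \<in> (\<Union>i\<in>{..<k}. {e. e \<subseteq> ?P i \<and> card e = 2})" using c by blast
  next
    fix e assume "e \<in> (\<Union>i\<in>{..<k}. {e. e \<subseteq> ?P i \<and> card e = 2})"
    then show "e \<in> monoP n f" unfolding monoP_def all_pairs_def by blast
  qed
  have "card (monoP n f) = (\<Sum>i<k. card {e. e \<subseteq> ?P i \<and> card e = 2})"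
    unfolding eq
  proof (rule card_UN_disjoint)
    show "finite {..<k}" by simp
    show "\<forall>i\<in>{..<k}. finite {e. e \<subseteq> ?P i \<and> card e = 2}"
    proof
      fix i :: nat
      have "{e. e \<subseteq> ?P i \<and> card e = 2} \<subseteq> Pow (?P i)" by blast
      moreover have "finite (Pow (?P i))" by simp
      ultimately show "finite {e. e \<subseteq> ?P i \<and> card e = 2}" by (rule finite_subset)
    qed
    show "\<forall>i\<in>{..<k}. \<forall>j\<in>{..<k}. i \<noteq> j \<longrightarrow> {e. e \<subseteq> ?P i \<and> card e = 2} \<inter> {e. e \<subseteq> ?P j \<and> card e = 2} = {}"
    proof (intro ballI impI)
      fix i j :: nat assume "i \<noteq> j"
      show "{e. e \<subseteq> ?P i \<and> card e = 2} \<inter> {e. e \<subseteq> ?P j \<and> card e = 2} = {}"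
      proof (rule ccontr)
        assume "\<not> ?thesis"
        then obtain e where "e \<subseteq> ?P i" "e \<subseteq> ?P j" "card e = 2" by auto
        then obtain u w where "e = {u,w}" unfolding card_2_iff by blast
        then have "u \<in> e" by simp
        with \<open>e \<subseteq> ?P i\<close> \<open>e \<subseteq> ?P j\<close> \<open>i \<noteq> j\<close> show False by blast
      qed
    qed
  qed
  also have "\<dots> = (\<Sum>i<k. sz n k i choose 2)"
  proof (rule sum.cong)
    fix i assume "i \<in> {..<k}"
    then have "card (?P i) = sz n k i" using assms by (auto simp: EP_iff cnt_def)
    then show "card {e. e \<subseteq> ?P i \<and> card e = 2} = sz n k i choose 2"
      using n_subsets[of "?P i" 2] by simp
  qed simp
  finally show ?thesis unfolding NN_def .
qed

lemma indep_iff: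
  assumes "E \<subseteq> all_pairs n"
  shows "parts_independent E f \<longleftrightarrow> E \<inter> monoP n f = {}"
proof
  assume a: "parts_independent E f"
  show "E \<inter> monoP n f = {}"
  proof (rule ccontr)
    assume "E \<inter> monoP n f \<noteq> {}"
    then obtain e where e: "e \<in> E" "e \<in> monoP n f" by blast
    then have c: "card e = 2" and m: "\<forall>u\<in>e. \<forall>v\<in>e. f u = f v" unfolding monoP_def all_pairs_def by blast+
    from c obtain u v where uv: "e = {u, v}" unfolding card_2_iff by blast
    have "f u = f v" using m uv by blast
    moreover have "{u,v} \<in> E" using e uv by simp
    ultimately show False using a unfolding parts_independent_def by blast
  qed
next
  assume a: "E \<inter> monoP n f = {}"
  show "parts_independent E f" unfolding parts_independent_def
  proof (intro allI impI)
    fix u v assume uv: "{u, v} \<in> E"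
    show "f u \<noteq> f v"
    proof
      assume fe: "f u = f v"
      have "{u,v} \<in> all_pairs n" using uv assms by blast
      then have "{u,v} \<in> monoP n f" using fe unfolding monoP_def by auto
      with uv a show False by blast
    qed
  qed
qed



definition ins :: "nat \<Rightarrow> (nat \<Rightarrow> nat) \<Rightarrow> nat \<Rightarrow> nat \<Rightarrow> nat" where
  "ins j f v w = (if w < v then f w else if w = v then j else f (w - 1))"

definition rem :: "(nat \<Rightarrow> nat) \<Rightarrow> nat \<Rightarrow> nat \<Rightarrow> nat" where
  "rem g v w = (if w < v then g w else g (Suc w))"

lemma cnt_split:
  assumes "v \<le> n"
  shows "cnt n f i = card {w\<in>{0..<v}. f w = i} + card {w\<in>{v..<n}. f w = i}"
proof -
  have "{w\<in>{0..<n}. f w = i} = {w\<in>{0..<v}. f w = i} \<union> {w\<in>{v..<n}. f w = i}"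
    using assms by auto
  moreover have "card ({w\<in>{0..<v}. f w = i} \<union> {w\<in>{v..<n}. f w = i}) = card {w\<in>{0..<v}. f w = i} + card {w\<in>{v..<n}. f w = i}"
    by (rule card_Un_disjoint) auto
  ultimately show ?thesis unfolding cnt_def by simp
qed

lemma cnt_Suc_split:
  assumes "v \<le> n"
  shows "cnt (Suc n) g i = card {w\<in>{0..<v}. g w = i} + (if g v = i then 1 else 0)
            + card {w\<in>{v..<n}. g (Suc w) = i}"
proof -
  have e1: "{w\<in>{0..<Suc n}. g w = i} = ({w\<in>{0..<v}. g w = i} \<union> {w\<in>{v}. g w = i})
       \<union> Suc ` {w\<in>{v..<n}. g (Suc w) = i}"
  proof (intro equalityI subsetI)
    fix x assume x: "x \<in> {w\<in>{0..<Suc n}. g w = i}"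
    show "x \<in> ({w\<in>{0..<v}. g w = i} \<union> {w\<in>{v}. g w = i}) \<union> Suc ` {w\<in>{v..<n}. g (Suc w) = i}"
    proof (cases "x \<le> v")
      case True then show ?thesis using x by auto
    next
      case False
      then obtain y where "x = Suc y" "y \<ge> v" by (metis Suc_le_D not_le_imp_less Suc_le_eq less_Suc_eq_le)
      then show ?thesis using x by auto
    qed
  next
    fix x assume "x \<in> ({w\<in>{0..<v}. g w = i} \<union> {w\<in>{v}. g w = i}) \<union> Suc ` {w\<in>{v..<n}. g (Suc w) = i}"
    then show "x \<in> {w\<in>{0..<Suc n}. g w = i}" using assms by auto
  qed
  have "{w\<in>{v}. g w = i} = (if g v = i then {v} else {})" by auto
  then have c2: "card {w\<in>{v}. g w = i} = (if g v = i then 1 else 0)" by simp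
  have c3: "card (Suc ` {w\<in>{v..<n}. g (Suc w) = i}) = card {w\<in>{v..<n}. g (Suc w) = i}"
    by (rule card_image) auto
  have u1: "card ({w\<in>{0..<v}. g w = i} \<union> {w\<in>{v}. g w = i}) = card {w\<in>{0..<v}. g w = i} + card {w\<in>{v}. g w = i}"
    by (rule card_Un_disjoint) auto
  have u2: "card (({w\<in>{0..<v}. g w = i} \<union> {w\<in>{v}. g w = i}) \<union> Suc ` {w\<in>{v..<n}. g (Suc w) = i})
     = card ({w\<in>{0..<v}. g w = i} \<union> {w\<in>{v}. g w = i}) + card (Suc ` {w\<in>{v..<n}. g (Suc w) = i})"
    by (rule card_Un_disjoint) auto
  show ?thesis unfolding cnt_def e1 u2 u1 c2 c3 ..
qed

lemma sz_Suc:
  assumes "0 < k" "i < k"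
  shows "sz (Suc n) k i = sz n k i + (if i = n mod k then 1 else 0)"
proof (cases "Suc (n mod k) = k")
  case True
  then have "Suc n mod k = 0" "Suc n div k = Suc (n div k)" using assms
    by (simp_all add: mod_Suc div_Suc)
  then show ?thesis using True assms unfolding sz_def by auto
next
  case False
  then have "Suc n mod k = Suc (n mod k)" "Suc n div k = n div k" using assms
    by (simp_all add: mod_Suc div_Suc)
  then show ?thesis using False assms unfolding sz_def by auto
qed

lemma ins_EP:
  assumes f: "f \<in> equipartitions n k" and v: "v \<le> n" and k: "0 < k"
  shows "ins (n mod k) f v \<in> equipartitions (Suc n) k"
proof -
  let ?h = "ins (n mod k) f v"
  have z: "\<forall>w\<ge>n. f w = 0" and r: "\<forall>w<n. f w < k" and c: "\<forall>i<k. cnt n f i = sz n k i"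
    using f by (auto simp: EP_iff)
  have "\<forall>w\<ge>Suc n. ?h w = 0" using z v unfolding ins_def by auto
  moreover have "\<forall>w<Suc n. ?h w < k" using r v k unfolding ins_def by auto
  moreover have "\<forall>i<k. cnt (Suc n) ?h i = sz (Suc n) k i"
  proof (intro allI impI)
    fix i assume i: "i < k"
    have "cnt (Suc n) ?h i = card {w\<in>{0..<v}. ?h w = i} + (if ?h v = i then 1 else 0)
            + card {w\<in>{v..<n}. ?h (Suc w) = i}" by (rule cnt_Suc_split[OF v])
    also have "{w\<in>{0..<v}. ?h w = i} = {w\<in>{0..<v}. f w = i}" unfolding ins_def by auto
    also have "{w\<in>{v..<n}. ?h (Suc w) = i} = {w\<in>{v..<n}. f w = i}" unfolding ins_def by auto
    also have "?h v = n mod k" unfolding ins_def by auto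
    finally have "cnt (Suc n) ?h i = cnt n f i + (if i = n mod k then 1 else 0)"
      using cnt_split[OF v, of f i] by auto
    then show "cnt (Suc n) ?h i = sz (Suc n) k i" using c i sz_Suc[OF k i] by auto
  qed
  ultimately show ?thesis by (simp add: EP_iff)
qed

lemma rem_EP:
  assumes g: "g \<in> equipartitions (Suc n) k" and v: "v \<le> n" and gv: "g v = n mod k" and k: "0 < k"
  shows "rem g v \<in> equipartitions n k"
proof -
  let ?h = "rem g v"
  have z: "\<forall>w\<ge>Suc n. g w = 0" and r: "\<forall>w<Suc n. g w < k" and c: "\<forall>i<k. cnt (Suc n) g i = sz (Suc n) k i"
    using g by (auto simp: EP_iff)
  have "\<forall>w\<ge>n. ?h w = 0" using z v unfolding rem_def by auto
  moreover have "\<forall>w<n. ?h w < k" using r v k unfolding rem_def by auto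
  moreover have "\<forall>i<k. cnt n ?h i = sz n k i"
  proof (intro allI impI)
    fix i assume i: "i < k"
    have "cnt n ?h i = card {w\<in>{0..<v}. ?h w = i} + card {w\<in>{v..<n}. ?h w = i}"
      by (rule cnt_split[OF v])
    also have "{w\<in>{0..<v}. ?h w = i} = {w\<in>{0..<v}. g w = i}" unfolding rem_def by auto
    also have "{w\<in>{v..<n}. ?h w = i} = {w\<in>{v..<n}. g (Suc w) = i}" unfolding rem_def by auto
    finally have "cnt n ?h i + (if g v = i then 1 else 0) = cnt (Suc n) g i"
      using cnt_Suc_split[OF v, of g i] by auto
    then show "cnt n ?h i = sz n k i" using c i sz_Suc[OF k i] gv by (cases "i = n mod k") auto
  qed
  ultimately show ?thesis by (simp add: EP_iff)
qed

lemma EP_ratio: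
  assumes k: "0 < k"
  shows "card (equipartitions (Suc n) k) * (n div k + 1) = card (equipartitions n k) * Suc n"
proof -
  define j where "j = n mod k"
  have jk: "j < k" using k unfolding j_def by auto
  define S where "S = Sigma (equipartitions (Suc n) k) (\<lambda>g. {v\<in>{0..<Suc n}. g v = j})"
  have "card S = (\<Sum>g\<in>equipartitions (Suc n) k. card {v\<in>{0..<Suc n}. g v = j})"
    unfolding S_def by (rule card_SigmaI) (auto simp: finite_EP)
  also have "\<dots> = (\<Sum>g\<in>equipartitions (Suc n) k. n div k + 1)"
  proof (rule sum.cong)
    fix g assume "g \<in> equipartitions (Suc n) k"
    then have "cnt (Suc n) g j = sz (Suc n) k j" using jk by (auto simp: EP_iff)
    then show "card {v\<in>{0..<Suc n}. g v = j} = n div k + 1"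
      using sz_Suc[OF k jk, of n] unfolding cnt_def sz_def j_def by auto
  qed simp
  finally have cS: "card S = card (equipartitions (Suc n) k) * (n div k + 1)" by simp
  have "bij_betw (\<lambda>(f,v). (ins j f v, v)) (equipartitions n k \<times> {0..<Suc n}) S"
  proof (rule bij_betw_byWitness[where f' = "\<lambda>(g,v). (rem g v, v)"])
    show "\<forall>a\<in>equipartitions n k \<times> {0..<Suc n}. (\<lambda>(g,v). (rem g v, v)) ((\<lambda>(f,v). (ins j f v, v)) a) = a"
    proof
      fix a assume "a \<in> equipartitions n k \<times> {0..<Suc n}"
      then obtain f v where a: "a = (f,v)" "f \<in> equipartitions n k" "v < Suc n" by auto
      have "rem (ins j f v) v = f" unfolding rem_def ins_def by (rule ext) auto
      then show "(\<lambda>(g,v). (rem g v, v)) ((\<lambda>(f,v). (ins j f v, v)) a) = a" using a by simp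
    qed
    show "\<forall>a\<in>S. (\<lambda>(f,v). (ins j f v, v)) ((\<lambda>(g,v). (rem g v, v)) a) = a"
    proof
      fix a assume "a \<in> S"
      then obtain g v where a: "a = (g,v)" "g v = j" unfolding S_def by auto
      have "ins j (rem g v) v = g" unfolding rem_def ins_def
      proof (rule ext)
        fix w show "(if w < v then if w < v then g w else g (Suc w) else if w = v then j
             else if w - 1 < v then g (w - 1) else g (Suc (w - 1))) = g w"
          using a(2) by (cases "w < v"; cases "w = v") auto
      qed
      then show "(\<lambda>(f,v). (ins j f v, v)) ((\<lambda>(g,v). (rem g v, v)) a) = a" using a by simp
    qed
    show "(\<lambda>(f,v). (ins j f v, v)) ` (equipartitions n k \<times> {0..<Suc n}) \<subseteq> S"
    proof
      fix b assume "b \<in> (\<lambda>(f,v). (ins j f v, v)) ` (equipartitions n k \<times> {0..<Suc n})"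
      then obtain f v where b: "b = (ins j f v, v)" "f \<in> equipartitions n k" "v < Suc n" by auto
      then show "b \<in> S" unfolding S_def j_def using ins_EP[OF b(2) _ k, of v]
        by (auto simp: ins_def)
    qed
    show "(\<lambda>(g,v). (rem g v, v)) ` S \<subseteq> equipartitions n k \<times> {0..<Suc n}"
    proof
      fix b assume "b \<in> (\<lambda>(g,v). (rem g v, v)) ` S"
      then obtain g v where b: "b = (rem g v, v)" "g \<in> equipartitions (Suc n) k" "v < Suc n" "g v = j"
        unfolding S_def by auto
      then show "b \<in> equipartitions n k \<times> {0..<Suc n}" using rem_EP[OF b(2) _ _ k, of v]
        unfolding j_def by auto
    qed
  qed
  then have "card S = card (equipartitions n k \<times> {0..<Suc n})" by (simp add: bij_betw_same_card)
  then show ?thesis using cS by (simp add: card_cartesian_product)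
qed

lemma EP_pos:
  assumes k: "0 < k"
  shows "0 < card (equipartitions n k)"
proof (induction n)
  case 0
  have "(\<lambda>_. 0) \<in> equipartitions 0 k" by (simp add: EP_iff cnt_def sz_def)
  then show ?case using finite_EP card_gt_0_iff by blast
next
  case (Suc n)
  then show ?case using EP_ratio[OF k, of n] by (metis mult_is_0 nat.distinct(1) neq0_conv)
qed



lemma choose2_Suc: "Suc a choose 2 = (a choose 2) + a"
  by (simp add: numeral_2_eq_2)

lemma two_choose2: "2 * (a choose 2) = a * (a - 1)"
proof (induction a)
  case (Suc a)
  then show ?case by (cases a) (simp_all add: choose2_Suc algebra_simps)
qed simp

lemma NN_Suc:
  assumes k: "0 < k"
  shows "NN (Suc n) k = NN n k + n div k"
proof -
  have "NN (Suc n) k = (\<Sum>i<k. (sz n k i choose 2) + (if i = n mod k then sz n k i else 0))"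
    unfolding NN_def
  proof (rule sum.cong)
    fix i assume "i \<in> {..<k}"
    then have i: "i < k" by simp
    show "sz (Suc n) k i choose 2 = (sz n k i choose 2) + (if i = n mod k then sz n k i else 0)"
      using sz_Suc[OF k i, of n] choose2_Suc by auto
  qed simp
  also have "\<dots> = NN n k + (\<Sum>i<k. if i = n mod k then sz n k i else 0)"
    unfolding NN_def by (simp add: sum.distrib)
  also have "(\<Sum>i<k. if i = n mod k then sz n k i else 0) = sz n k (n mod k)"
    using k by (simp add: sum.delta')
  also have "sz n k (n mod k) = n div k" unfolding sz_def by simp
  finally show ?thesis .
qed

lemma sum_sz:
  assumes k: "0 < k"
  shows "(\<Sum>i<k. sz n k i) = n"
proof -
  have "(\<Sum>i<k. sz n k i) = (\<Sum>i<k. n div k + (if i < n mod k then 1 else 0))"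
    unfolding sz_def by (rule sum.cong) auto
  also have "\<dots> = k * (n div k) + (\<Sum>i<k. if i < n mod k then 1 else 0)"
    by (simp add: sum.distrib)
  also have "(\<Sum>i<k. if i < n mod k then 1 else 0) = card {i\<in>{..<k}. i < n mod k}"
    by (simp add: sum.inter_filter[symmetric])
  also have "{i\<in>{..<k}. i < n mod k} = {..<n mod k}" using k mod_less_divisor[OF k, of n] by auto
  finally show ?thesis by simp
qed

lemma NN_bound:
  assumes k: "0 < k"
  shows "2 * NN n k \<le> n * (n div k)"
proof -
  have "2 * NN n k = (\<Sum>i<k. 2 * (sz n k i choose 2))" unfolding NN_def by (simp add: sum_distrib_left)
  also have "\<dots> \<le> (\<Sum>i<k. sz n k i * (n div k))"
  proof (rule sum_mono)
    fix i assume "i \<in> {..<k}"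
    have le: "sz n k i - 1 \<le> n div k" unfolding sz_def by auto
    have "2 * (sz n k i choose 2) = sz n k i * (sz n k i - 1)"
      by (rule two_choose2)
    also have "\<dots> \<le> sz n k i * (n div k)" using le by simp
    finally show "2 * (sz n k i choose 2) \<le> sz n k i * (n div k)" .
  qed
  also have "\<dots> = (\<Sum>i<k. sz n k i) * (n div k)" by (rule sum_distrib_right[symmetric])
  also have "\<dots> = n * (n div k)" using sum_sz[OF k, of n] by simp
  finally show ?thesis .
qed

lemma binom_prod:
  fixes M m N :: nat
  assumes "N + m \<le> M"
  shows "real ((M - N) choose m) / real (M choose m) = (\<Prod>i<N. (real M - real m - real i) / (real M - real i))"
  using assms
proof (induction N)
  case 0
  have "0 < M choose m" using 0 by simp
  then show ?case by simp
next
  case (Suc N)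
  define a where "a = M - N"
  have a1: "1 \<le> a" "m < a" using Suc.prems unfolding a_def by auto
  have ab: "(a - m) * (a choose m) = a * ((a - 1) choose m)" by (rule binomial_absorb_comp)
  have pos: "0 < a choose m" using a1 by simp
  have step: "real ((a - 1) choose m) / real (a choose m) = (real M - real m - real N) / (real M - real N)"
  proof -
    have "real (a - m) * real (a choose m) = real a * real ((a - 1) choose m)"
      using ab by (metis of_nat_mult)
    moreover have "real (a - m) = real M - real m - real N" "real a = real M - real N"
      using a1 Suc.prems unfolding a_def by auto
    moreover have "0 < real a" using a1 by simp
    ultimately show ?thesis using pos by (simp add: field_simps)
  qed
  have "real ((M - Suc N) choose m) / real (M choose m)
      = (real ((M - N) choose m) / real (M choose m)) * (real ((a - 1) choose m) / real (a choose m))"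
    using pos unfolding a_def by (simp add: field_simps)
  also have "\<dots> = (\<Prod>i<N. (real M - real m - real i) / (real M - real i)) * ((real M - real m - real N) / (real M - real N))"
    using Suc step by simp
  finally show ?case by simp
qed


lemma card_graphs_nm: "card (graphs_nm n m) = (n choose 2) choose m"
  unfolding graphs_nm_def using n_subsets[OF finite_all_pairs[of n], of m] card_all_pairs[of n] by simp

lemma finite_graphs_nm: "finite (graphs_nm n m)"
proof -
  have "graphs_nm n m \<subseteq> Pow (all_pairs n)" unfolding graphs_nm_def by blast
  then show ?thesis using finite_all_pairs by (meson finite_Pow_iff finite_subset)
qed

lemma card_indep_graphs:
  assumes f: "f \<in> equipartitions n k"
  shows "card {E\<in>graphs_nm n m. parts_independent E f} = ((n choose 2) - NN n k) choose m"
proof -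
  have "{E\<in>graphs_nm n m. parts_independent E f} = {E. E \<subseteq> all_pairs n - monoP n f \<and> card E = m}"
    unfolding graphs_nm_def using indep_iff[of _ n f] by blast
  moreover have "card (all_pairs n - monoP n f) = (n choose 2) - NN n k"
    using card_Diff_subset[OF finite_subset[OF mono_sub finite_all_pairs] mono_sub]
      card_mono[OF f] card_all_pairs by simp
  ultimately show ?thesis using n_subsets[of "all_pairs n - monoP n f" m] finite_all_pairs by simp
qed

lemma sum_X:
  assumes k: "0 < k"
  shows "(\<Sum>E\<in>graphs_nm n m. X_count n k E) = card (equipartitions n k) * (((n choose 2) - NN n k) choose m)"
proof -
  have "(\<Sum>E\<in>graphs_nm n m. X_count n k E)
      = (\<Sum>E\<in>graphs_nm n m. \<Sum>f\<in>equipartitions n k. if parts_independent E f then 1 else 0)"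
  proof (rule sum.cong)
    fix E
    have "X_count n k E = (\<Sum>f\<in>{f\<in>equipartitions n k. parts_independent E f}. 1)"
      unfolding X_count_def by simp
    also have "\<dots> = (\<Sum>f\<in>equipartitions n k. if parts_independent E f then 1 else 0)"
      by (rule sum.inter_filter[OF finite_EP])
    finally show "X_count n k E = (\<Sum>f\<in>equipartitions n k. if parts_independent E f then 1 else 0)" .
  qed simp
  also have "\<dots> = (\<Sum>f\<in>equipartitions n k. \<Sum>E\<in>graphs_nm n m. if parts_independent E f then 1 else 0)"
    by (rule sum.swap)
  also have "\<dots> = (\<Sum>f\<in>equipartitions n k. ((n choose 2) - NN n k) choose m)"
  proof (rule sum.cong)
    fix f assume f: "f \<in> equipartitions n k"
    have "(\<Sum>E\<in>graphs_nm n m. if parts_independent E f then 1 else 0)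
        = (\<Sum>E\<in>{E\<in>graphs_nm n m. parts_independent E f}. 1::nat)"
      by (rule sum.inter_filter[OF finite_graphs_nm, symmetric])
    also have "\<dots> = ((n choose 2) - NN n k) choose m" using card_indep_graphs[OF f] by simp
    finally show "(\<Sum>E\<in>graphs_nm n m. if parts_independent E f then 1 else 0) = ((n choose 2) - NN n k) choose m" .
  qed simp
  finally show ?thesis by simp
qed

lemma m_edges_le:
  assumes "0 \<le> p" "p \<le> 1"
  shows "m_edges p n \<le> n choose 2"
proof -
  have "p * real (n choose 2) \<le> real (n choose 2)" using assms by (simp add: mult_left_le_one_le)
  then have "\<lfloor>p * real (n choose 2)\<rfloor> \<le> int (n choose 2)" by linarith
  then show ?thesis unfolding m_edges_def by simp
qed

lemma mu_formula:
  assumes "0 \<le> p" "p \<le> 1" "0 < k"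
  shows "mu p n k = real (card (equipartitions n k)) * real (((n choose 2) - NN n k) choose m_edges p n)
                    / real ((n choose 2) choose m_edges p n)"
proof -
  let ?G = "graphs_nm n (m_edges p n)"
  have cG: "card ?G = (n choose 2) choose m_edges p n" by (rule card_graphs_nm)
  have "card ?G > 0" unfolding cG using m_edges_le[OF assms(1,2), of n] by simp
  then have ne: "?G \<noteq> {}" by auto
  have "mu p n k = (\<Sum>E\<in>?G. real (X_count n k E)) / real (card ?G)"
    unfolding mu_def by (rule integral_pmf_of_set[OF ne finite_graphs_nm])
  also have "(\<Sum>E\<in>?G. real (X_count n k E)) = real (\<Sum>E\<in>?G. X_count n k E)" by simp
  finally show ?thesis unfolding sum_X[OF assms(3)] cG by simp
qed


lemma lin_helper:
  fixes a b u1 u2 l1 l2 X Y e1 e2 :: real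
  assumes "a \<le> u1" "u2 \<le> b" "l1 \<le> a" "b \<le> l2" "u1 - u2 = X + e2" "l1 - l2 = X - e1"
    "0 \<le> X" "X \<le> Y" "e2 \<le> e1"
  shows "\<bar>a - b\<bar> \<le> Y + e1"
  using assms unfolding abs_le_iff by linarith

lemma fac_a:
  fixes M M' m m' i N n p q :: real
  assumes p0: "0 < p" and p1: "p < 1" and n2: "2 \<le> n"
    and MM: "M = n * (n - 1) / 2" and MM': "M' = M + n"
    and m1: "m \<le> p * M" and m2: "p * M - 1 \<le> m"
    and m1': "m' \<le> p * M'" and m2': "p * M' - 1 \<le> m'"
    and i0: "0 \<le> i" and iN: "i \<le> N" and hN: "2 * N \<le> n * (q + 1)"
    and hq: "28 * (q + 1)^2 \<le> (1 - p) * n" and q0: "0 \<le> q"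
  shows "3/4 * (1 - p) \<le> (M - m - i) / (M - i)"
    and "\<bar>(M' - m' - i) / (M' - i) - (M - m - i) / (M - i)\<bar> \<le> 21 * (q + 1) / n^2"
proof -
  have h1: "28 * (q + 1) \<le> (1 - p) * n"
    using hq q0 by (smt (verit) mult_le_cancel_left1 power2_eq_square)
  have hM: "n^2 / 4 \<le> M" using n2 unfolding MM by (simp add: power2_eq_square field_simps)
  have h2: "N \<le> (1 - p) * M / 4"
  proof -
    have a0: "0 \<le> (1 - p) * (n/2 - 1)" using p1 n2 by simp
    have a: "14 * (q + 1) \<le> (1 - p) * (n - 1)" using h1 a0 p0 q0 by (simp add: algebra_simps)
    have "N \<le> n * (q + 1) / 2" using hN by simp
    also have "\<dots> \<le> n * ((1 - p) * (n - 1)) / 8" using a n2 q0 by (simp add: mult_left_mono)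
    also have "\<dots> = (1 - p) * M / 4" unfolding MM by (simp add: field_simps)
    finally show ?thesis .
  qed
  have "0 < n^2 / 4" using n2 by simp
  then have Mpos: "0 < M" using hM by linarith
  have "0 \<le> p * M" using p0 Mpos by simp
  then have "(1 - p) * M / 4 \<le> M / 4" by (simp add: algebra_simps)
  then have D: "3 * n^2 / 16 \<le> M - i" using h2 iN hM by linarith
  have "0 < 3 * n^2 / 16" using n2 by simp
  then have Dpos: "0 < M - i" using D by linarith
  have e1: "(1 - p) * M / 4 = M / 4 - (p * M) / 4" by (simp add: field_simps)
  have e2: "3/4 * (1 - p) * M = 3 * M / 4 - 3 * (p * M) / 4" by (simp add: field_simps)
  have num: "3/4 * (1 - p) * M \<le> M - m - i" using m1 iN h2 unfolding e1 e2 by linarith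
  show A: "3/4 * (1 - p) \<le> (M - m - i) / (M - i)"
  proof -
    have "3/4 * (1 - p) = (3/4 * (1 - p) * M) / M" using Mpos by simp
    also have "\<dots> \<le> (M - m - i) / M" by (intro divide_right_mono num) (use Mpos in simp)
    also have "\<dots> \<le> (M - m - i) / (M - i)"
    proof (intro divide_left_mono)
      have "0 \<le> 3/4 * (1 - p) * M" using p1 Mpos by simp
      then show "0 \<le> M - m - i" using num by linarith
      show "M - i \<le> M" using i0 by simp
      show "0 < M * (M - i)" using Mpos Dpos by simp
    qed
    finally show ?thesis .
  qed
  define Dv where "Dv = M - i"
  define Dv' where "Dv' = Dv + n"
  have Dv'_eq: "M' - i = Dv'" unfolding Dv'_def Dv_def MM' by simp
  have Dv'pos: "0 < Dv'" using Dpos n2 unfolding Dv'_def Dv_def by simp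
  have Dpos2: "0 < Dv" using Dpos unfolding Dv_def .
  have eqA: "(M - m - i) / (M - i) = 1 - m / Dv" using Dpos2 unfolding Dv_def by (simp add: field_simps)
  have eqA': "(M' - m' - i) / (M' - i) = 1 - m' / Dv'" using Dv'pos Dv'_eq by (simp add: field_simps)
  have diff_eq: "(M' - m' - i) / (M' - i) - (M - m - i) / (M - i) = m / Dv - m' / Dv'"
    unfolding eqA eqA' by simp
  have up1: "m / Dv \<le> p * M / Dv" using m1 Dpos2 by (simp add: divide_right_mono)
  have up2: "(p * M' - 1) / Dv' \<le> m' / Dv'" using m2' Dv'pos by (simp add: divide_right_mono)
  have lo1: "(p * M - 1) / Dv \<le> m / Dv" using m2 Dpos2 by (simp add: divide_right_mono)
  have lo2: "m' / Dv' \<le> p * M' / Dv'" using m1' Dv'pos by (simp add: divide_right_mono)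
  have eqs: "M = Dv + i" "M' = Dv' + i" "Dv' = Dv + n" unfolding Dv_def Dv'_def MM' by simp_all
  have nz: "Dv \<noteq> 0" "Dv' \<noteq> 0" using Dpos2 Dv'pos by simp_all
  have id1: "p * M / Dv - (p * M' - 1) / Dv' = p * n * i / (Dv * Dv') + 1 / Dv'"
  proof -
    have "p * M / Dv - (p * M' - 1) / Dv' = (p * M * Dv' - (p * M' - 1) * Dv) / (Dv * Dv')"
      using nz by (simp add: diff_frac_eq)
    also have "p * M * Dv' - (p * M' - 1) * Dv = p * n * i + Dv"
      unfolding eqs by (simp add: algebra_simps)
    also have "(p * n * i + Dv) / (Dv * Dv') = p * n * i / (Dv * Dv') + 1 / Dv'"
      using nz by (simp add: add_divide_distrib)
    finally show ?thesis .
  qed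
  have id2: "(p * M - 1) / Dv - p * M' / Dv' = p * n * i / (Dv * Dv') - 1 / Dv"
  proof -
    have "(p * M - 1) / Dv - p * M' / Dv' = ((p * M - 1) * Dv' - p * M' * Dv) / (Dv * Dv')"
      using nz by (simp add: diff_frac_eq)
    also have "(p * M - 1) * Dv' - p * M' * Dv = p * n * i - Dv'"
      unfolding eqs by (simp add: algebra_simps)
    also have "(p * n * i - Dv') / (Dv * Dv') = p * n * i / (Dv * Dv') - 1 / Dv"
      using nz by (simp add: diff_divide_distrib)
    finally show ?thesis .
  qed
  have t0: "0 \<le> p * n * i / (Dv * Dv')" using p0 n2 i0 Dpos2 Dv'pos by simp
  have t1: "p * n * i / (Dv * Dv') \<le> n * N / Dv^2"
  proof -
    have ni: "0 \<le> n * i" using n2 i0 by simp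
    have "p * (n * i) \<le> 1 * (n * i)" using p1 ni by (intro mult_right_mono) auto
    moreover have "n * i \<le> n * N" using n2 iN by (intro mult_left_mono) auto
    ultimately have a: "p * n * i \<le> n * N" by (simp add: mult.assoc)
    have b: "Dv^2 \<le> Dv * Dv'" using Dpos2 n2 unfolding Dv'_def power2_eq_square by (simp add: algebra_simps)
    have c: "0 \<le> n * N" using a ni p0 by (smt (verit) mult_nonneg_nonneg mult.assoc)
    have "0 < Dv^2" using Dpos2 by simp
    then show ?thesis using frac_le[OF c a \<open>0 < Dv^2\<close> b] by simp
  qed
  have t2: "1 / Dv' \<le> 1 / Dv" using Dpos2 n2 unfolding Dv'_def by (simp add: frac_le)
  have bound: "\<bar>m / Dv - m' / Dv'\<bar> \<le> n * N / Dv^2 + 1 / Dv"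
    by (rule lin_helper[OF up1 up2 lo1 lo2 id1 id2 t0 t1 t2])
  have b1: "n * N / Dv^2 \<le> 15 * (q + 1) / n^2"
  proof -
    have DD: "(3 * n^2 / 16)^2 \<le> Dv^2" using D unfolding Dv_def
      by (simp add: power_mono)
    have nN1: "0 \<le> n * N" using n2 i0 iN by simp
    have "n * (2 * N) \<le> n * (n * (q + 1))" by (rule mult_left_mono[OF hN]) (use n2 in simp)
    then have nN2: "n * N \<le> n^2 * (q + 1) / 2" by (simp add: power2_eq_square algebra_simps)
    note nN = nN1 nN2
    have "n * N / Dv^2 \<le> (n^2 * (q + 1) / 2) / (3 * n^2 / 16)^2"
      using DD nN n2 by (intro frac_le) auto
    also have "\<dots> = 128 * (q + 1) / (9 * n^2)" using n2 by (simp add: field_simps power2_eq_square)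
    also have "\<dots> \<le> 15 * (q + 1) / n^2" using q0 n2 by (simp add: field_simps)
    finally show ?thesis .
  qed
  have b2: "1 / Dv \<le> 6 * (q + 1) / n^2"
  proof -
    have "1 / Dv \<le> 1 / (3 * n^2 / 16)" using D n2 unfolding Dv_def by (intro frac_le) auto
    also have "\<dots> = 16 / (3 * n^2)" by simp
    also have "\<dots> \<le> 6 * (q + 1) / n^2" using q0 n2 by (simp add: field_simps)
    finally show ?thesis .
  qed
  have "21 * (q + 1) / n^2 = 15 * (q + 1) / n^2 + 6 * (q + 1) / n^2" by (simp add: add_divide_distrib[symmetric])
  then show "\<bar>(M' - m' - i) / (M' - i) - (M - m - i) / (M - i)\<bar> \<le> 21 * (q + 1) / n^2"
    using bound b1 b2 diff_eq by linarith
qed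


lemma fac_b:
  fixes M' m' i N n p q :: real
  assumes p0: "0 < p" and p1: "p < 1" and n2: "2 \<le> n"
    and MM': "M' = n * (n + 1) / 2"
    and m0': "0 \<le> m'" and m1': "m' \<le> p * M'" and m2': "p * M' - 1 \<le> m'"
    and i0: "0 \<le> i" and iN: "i \<le> N + q" and hN: "2 * N \<le> n * (q + 1)"
    and hq: "28 * (q + 1)^2 \<le> (1 - p) * n" and q0: "0 \<le> q"
  shows "(1 - p) * (1 - 2 * (q + 1) / ((1 - p) * n)) \<le> (M' - m' - i) / (M' - i)"
    and "(M' - m' - i) / (M' - i) \<le> (1 - p) * (1 + 2 / ((1 - p) * n^2))"
proof -
  have h1: "28 * (q + 1) \<le> (1 - p) * n"
    using hq q0 by (smt (verit) mult_le_cancel_left1 power2_eq_square)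
  have hM: "n^2 / 2 \<le> M'" using n2 unfolding MM' by (simp add: power2_eq_square field_simps)
  have "0 < n^2 / 2" using n2 by simp
  then have Mpos: "0 < M'" using hM by linarith
  have iq: "i \<le> n * (q + 1)"
  proof -
    have "q \<le> n * (q + 1) / 2"
    proof -
      have "2 * (q + 1) \<le> n * (q + 1)" using n2 q0 by (intro mult_right_mono) auto
      then have "2 * q \<le> n * (q + 1)" by (simp add: algebra_simps)
      then show ?thesis by simp
    qed
    then show ?thesis using iN hN by linarith
  qed
  have nn: "(1 - p) * (n^2 / 2) \<ge> 14 * (n * (q + 1))"
  proof -
    have "n * (28 * (q + 1)) \<le> n * ((1 - p) * n)" by (rule mult_left_mono[OF h1]) (use n2 in simp)
    then show ?thesis by (simp add: power2_eq_square algebra_simps)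
  qed
  have "(1 - p) * (n^2 / 2) \<le> (1 - p) * M'" by (rule mult_left_mono[OF hM]) (use p1 in simp)
  moreover have "0 \<le> n * (q + 1)" using n2 q0 by simp
  ultimately have numpos: "i \<le> (1 - p) * M'" using nn iq by linarith
  have ipos: "i < M'"
  proof -
    have "(1 - p) * M' < M'" using p0 Mpos by simp
    then show ?thesis using numpos by linarith
  qed
  define D where "D = M' - i"
  have Dpos: "0 < D" "D \<le> M'" using ipos i0 unfolding D_def by auto
  have eqA: "(M' - m' - i) / (M' - i) = 1 - m' / D" using Dpos unfolding D_def by (simp add: field_simps)
  show "(M' - m' - i) / (M' - i) \<le> (1 - p) * (1 + 2 / ((1 - p) * n^2))"
  proof -
    have "m' / M' \<le> m' / D" using Dpos m0' by (intro divide_left_mono) auto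
    moreover have "(p * M' - 1) / M' \<le> m' / M'" using m2' Mpos by (intro divide_right_mono) auto
    moreover have "(p * M' - 1) / M' = p - 1 / M'" using Mpos by (simp add: field_simps)
    moreover have "1 / M' \<le> 1 / (n^2 / 2)" using hM \<open>0 < n^2/2\<close> by (intro frac_le) auto
    moreover have "(1 - p) * (1 + 2 / ((1 - p) * n^2)) = 1 - p + 1 / (n^2 / 2)" using p1 n2 by (simp add: field_simps)
    ultimately show ?thesis unfolding eqA by linarith
  qed
  show "(1 - p) * (1 - 2 * (q + 1) / ((1 - p) * n)) \<le> (M' - m' - i) / (M' - i)"
  proof -
    have a: "m' / D \<le> p * M' / D" using m1' Dpos by (intro divide_right_mono) auto
    have b: "1 - p * M' / D = ((1 - p) * M' - i) / D" using Dpos unfolding D_def by (simp add: field_simps)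
    have c: "((1 - p) * M' - i) / M' \<le> ((1 - p) * M' - i) / D"
      using Dpos numpos by (intro divide_left_mono) auto
    have d: "((1 - p) * M' - i) / M' = (1 - p) - i / M'" using Mpos by (simp add: field_simps)
    have e: "i / M' \<le> (n * (q + 1)) / (n^2 / 2)" using iq i0 hM \<open>0 < n^2/2\<close> by (intro frac_le) auto
    have f: "(n * (q + 1)) / (n^2 / 2) = 2 * (q + 1) / n" using n2 by (simp add: power2_eq_square field_simps)
    have g: "(1 - p) * (1 - 2 * (q + 1) / ((1 - p) * n)) = (1 - p) - 2 * (q + 1) / n" using p1 n2 by (simp add: field_simps)
    show ?thesis unfolding eqA g using a b c d e f by linarith
  qed
qed

lemma prod_bounds:
  fixes a b :: "nat \<Rightarrow> real"
  assumes "\<And>i. i \<in> A \<Longrightarrow> 0 \<le> a i \<and> a i * (1 - e) \<le> b i \<and> b i \<le> a i * (1 + e)"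
    and "0 \<le> e" "e \<le> 1" and "finite A"
  shows "prod a A * (1 - e) ^ card A \<le> prod b A" "prod b A \<le> prod a A * (1 + e) ^ card A"
proof -
  have "prod (\<lambda>i. a i * (1 - e)) A \<le> prod b A"
    using assms by (intro prod_mono) auto
  then show "prod a A * (1 - e) ^ card A \<le> prod b A" by (simp add: prod.distrib)
  have "prod b A \<le> prod (\<lambda>i. a i * (1 + e)) A"
  proof (intro prod_mono conjI)
    fix i assume i: "i \<in> A"
    have "0 \<le> a i * (1 - e)" using assms(1)[OF i] assms(3) by simp
    then show "0 \<le> b i" using assms(1)[OF i] by linarith
    show "b i \<le> a i * (1 + e)" using assms(1)[OF i] by simp
  qed
  then show "prod b A \<le> prod a A * (1 + e) ^ card A" by (simp add: prod.distrib)
qed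

lemma pow_bounds:
  fixes e :: real
  assumes "0 \<le> e" "e \<le> 1" "real N * e \<le> 1/2"
  shows "1/2 \<le> (1 - e) ^ N" "(1 + e) ^ N \<le> 2"
proof -
  have "1 + real N * (- e) \<le> (1 + (- e)) ^ N" using assms by (intro Bernoulli_inequality) auto
  then show "1/2 \<le> (1 - e) ^ N" using assms by simp
  have "(1 + e) ^ N \<le> exp e ^ N" using assms by (intro power_mono) auto
  also have "\<dots> = exp (real N * e)" by (simp add: exp_of_nat_mult)
  also have "\<dots> \<le> exp (1/2)" using assms by simp
  also have "\<dots> \<le> 2" by (rule exp_half_le2)
  finally show "(1 + e) ^ N \<le> 2" .
qed


lemma ratio_core:
  fixes p n M M' m m' :: real and N q :: nat
  assumes p0: "0 < p" and p1: "p < 1" and n2: "2 \<le> n"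
    and MM: "M = n * (n - 1) / 2" and MM': "M' = M + n"
    and m1: "m \<le> p * M" and m2: "p * M - 1 \<le> m"
    and m0': "0 \<le> m'" and m1': "m' \<le> p * M'" and m2': "p * M' - 1 \<le> m'"
    and hN: "2 * real N \<le> n * (real q + 1)"
    and hq: "28 * (real q + 1)^2 \<le> (1 - p) * n"
  defines "A \<equiv> \<lambda>i::nat. (M - m - real i) / (M - real i)"
    and "A' \<equiv> \<lambda>i::nat. (M' - m' - real i) / (M' - real i)"
  shows "0 < (\<Prod>i<N. A i)"
    and "1/4 * (1 - p) ^ q * (\<Prod>i<N. A i) \<le> (\<Prod>i<N + q. A' i)"
    and "(\<Prod>i<N + q. A' i) \<le> 4 * (1 - p) ^ q * (\<Prod>i<N. A i)"
proof -
  define Q where "Q = real q + 1"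
  have Q1: "1 \<le> Q" unfolding Q_def by simp
  have hq': "28 * Q^2 \<le> (1 - p) * n" using hq unfolding Q_def .
  have hN': "2 * real N \<le> n * Q" using hN unfolding Q_def .
  have pn: "0 < (1 - p) * n" using p1 n2 by simp
  have QQ: "Q \<le> Q^2" using Q1 by (simp add: power2_eq_square)
  have MM'': "M' = n * (n + 1) / 2" unfolding MM' MM by (simp add: field_simps)
  define a0 where "a0 = 3/4 * (1 - p)"
  define eps where "eps = 28 * Q / ((1 - p) * n^2)"
  have a0pos: "0 < a0" unfolding a0_def using p1 by simp
  have eps0: "0 \<le> eps" unfolding eps_def using p1 Q1 by simp
  have eta: "21 * Q / n^2 = a0 * eps" unfolding a0_def eps_def using p1 n2 by (simp add: field_simps)
  have nsq: "n \<le> n^2" using n2 by (simp add: power2_eq_square)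
  have eps1: "eps \<le> 1"
  proof -
    have "28 * Q \<le> (1 - p) * n^2"
      using hq' QQ nsq p1 by (smt (verit, best) mult_left_mono)
    moreover have "0 < (1 - p) * n^2" using p1 n2 by simp
    ultimately show ?thesis unfolding eps_def by (simp add: divide_le_eq_1)
  qed
  have epsN: "real N * eps \<le> 1/2"
  proof -
    have "real N * eps \<le> (n * Q / 2) * eps" using hN' eps0 by (intro mult_right_mono) auto
    also have "\<dots> = 14 * Q^2 / ((1 - p) * n)" unfolding eps_def using n2 p1
      by (simp add: field_simps power2_eq_square)
    also have "\<dots> \<le> 1/2" using hq' pn by (simp add: field_simps)
    finally show ?thesis .
  qed
  have facA: "0 \<le> A i \<and> A i * (1 - eps) \<le> A' i \<and> A' i \<le> A i * (1 + eps)" if i: "i \<in> {..<N}" for i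
  proof -
    have iN: "real i \<le> real N" using i by simp
    note fa = fac_a[OF p0 p1 n2 MM MM' m1 m2 m1' m2' _ iN hN hq] 
    have Ai: "a0 \<le> A i" using fa(1) unfolding A_def a0_def by simp
    have d: "\<bar>A' i - A i\<bar> \<le> a0 * eps" using fa(2) eta unfolding A_def A'_def Q_def by simp
    have "a0 * eps \<le> A i * eps" using Ai eps0 by (simp add: mult_right_mono)
    then show ?thesis using d Ai a0pos by (auto simp: algebra_simps abs_le_iff)
  qed
  have low1: "(\<Prod>i<N. A i) * (1 - eps) ^ N \<le> (\<Prod>i<N. A' i)"
    and up1: "(\<Prod>i<N. A' i) \<le> (\<Prod>i<N. A i) * (1 + eps) ^ N"
    using prod_bounds[of "{..<N}" A eps A', OF facA eps0 eps1] by auto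
  have Apos: "0 < (\<Prod>i<N. A i)"
  proof (rule prod_pos)
    fix i assume "i \<in> {..<N}"
    then have "a0 \<le> A i" using fac_a(1)[OF p0 p1 n2 MM MM' m1 m2 m1' m2' _ _ hN hq, of "real i"]
      unfolding A_def a0_def by simp
    then show "0 < A i" using a0pos by linarith
  qed
  then show "0 < (\<Prod>i<N. A i)" .
  define d1 where "d1 = 2 / ((1 - p) * n^2)"
  define d2 where "d2 = 2 * Q / ((1 - p) * n)"
  have d10: "0 \<le> d1" unfolding d1_def using p1 by simp
  have d20: "0 \<le> d2" unfolding d2_def using p1 n2 Q1 by simp
  have d2Q: "Q * d2 \<le> 1/14"
  proof -
    have "Q * d2 = 2 * Q^2 / ((1 - p) * n)" unfolding d2_def by (simp add: power2_eq_square)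
    also have "\<dots> \<le> 1/14" using hq' pn by (simp add: field_simps)
    finally show ?thesis .
  qed
  have d1d2: "d1 \<le> d2"
  proof -
    have "0 < (1 - p) * n^2" using p1 n2 by simp
    then have "2 / ((1 - p) * n^2) \<le> 2 / ((1 - p) * n)" using pn nsq p1 n2
      by (intro divide_left_mono mult_left_mono mult_pos_pos) auto
    also have "\<dots> \<le> 2 * Q / ((1 - p) * n)" using Q1 pn by (simp add: divide_right_mono)
    finally show ?thesis unfolding d1_def d2_def .
  qed
  have qd2: "real q * d2 \<le> 1/2" using d2Q d20 unfolding Q_def by (simp add: algebra_simps)
  have "real q * d1 \<le> real q * d2" using d1d2 by (intro mult_left_mono) auto
  then have qd1: "real q * d1 \<le> 1/2" using qd2 by linarith
  have "1 * d2 \<le> Q * d2" using Q1 d20 by (rule mult_right_mono)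
  then have d21: "d2 \<le> 1" using d2Q by linarith
  have d11: "d1 \<le> 1" using d21 d1d2 by simp
  have facB: "(1 - p) * (1 - d2) \<le> A' i \<and> A' i \<le> (1 - p) * (1 + d1)" if i: "i \<in> {N..<N + q}" for i
  proof -
    have iN: "real i \<le> real N + real q" using i by simp
    note fb = fac_b[OF p0 p1 n2 MM'' m0' m1' m2' _ iN hN hq]
    then show ?thesis unfolding A'_def d1_def d2_def Q_def by simp
  qed
  have tl: "((1 - p) * (1 - d2)) ^ q \<le> (\<Prod>i\<in>{N..<N+q}. A' i)"
  proof -
    have "(\<Prod>i\<in>{N..<N+q}. (1 - p) * (1 - d2)) \<le> (\<Prod>i\<in>{N..<N+q}. A' i)"
      using facB d21 p1 by (intro prod_mono) auto
    then show ?thesis by simp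
  qed
  have tu: "(\<Prod>i\<in>{N..<N+q}. A' i) \<le> ((1 - p) * (1 + d1)) ^ q"
  proof -
    have "(\<Prod>i\<in>{N..<N+q}. A' i) \<le> (\<Prod>i\<in>{N..<N+q}. (1 - p) * (1 + d1))"
    proof (intro prod_mono conjI)
      fix i assume i: "i \<in> {N..<N+q}"
      have "0 \<le> (1 - p) * (1 - d2)" using d21 p1 by simp
      then show "0 \<le> A' i" using facB[OF i] by linarith
      show "A' i \<le> (1 - p) * (1 + d1)" using facB[OF i] by simp
    qed
    then show ?thesis by simp
  qed
  have split: "(\<Prod>i<N + q. A' i) = (\<Prod>i<N. A' i) * (\<Prod>i\<in>{N..<N+q}. A' i)"
  proof -
    have "{..<N + q} = {..<N} \<union> {N..<N+q}" by auto
    moreover have "prod A' ({..<N} \<union> {N..<N + q}) = prod A' {..<N} * prod A' {N..<N + q}"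
      by (rule prod.union_disjoint) auto
    ultimately show ?thesis by simp
  qed
  have pb1: "1/2 \<le> (1 - eps) ^ N" "(1 + eps) ^ N \<le> 2" using pow_bounds[OF eps0 eps1 epsN] by auto
  have pb2: "1/2 \<le> (1 - d2) ^ q" using pow_bounds[OF d20 d21 qd2] by auto
  have pb3: "(1 + d1) ^ q \<le> 2" using pow_bounds[OF d10 d11 qd1] by auto
  have pq: "0 \<le> (1 - p) ^ q" using p1 by simp
  have "(\<Prod>i<N. A i) * (1/2) \<le> (\<Prod>i<N. A i) * (1 - eps) ^ N"
    using pb1(1) Apos by (intro mult_left_mono) auto
  then have P1: "(\<Prod>i<N. A i) / 2 \<le> (\<Prod>i<N. A' i)" using low1 by simp
  have "(\<Prod>i<N. A i) * (1 + eps) ^ N \<le> (\<Prod>i<N. A i) * 2"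
    using pb1(2) Apos by (intro mult_left_mono) auto
  then have P2: "(\<Prod>i<N. A' i) \<le> 2 * (\<Prod>i<N. A i)" using up1 by simp
  have T1: "(1 - p) ^ q / 2 \<le> (\<Prod>i\<in>{N..<N+q}. A' i)"
  proof -
    have "(1 - p) ^ q * (1/2) \<le> (1 - p) ^ q * (1 - d2) ^ q" using pb2 pq by (rule mult_left_mono)
    then show ?thesis using tl by (simp add: power_mult_distrib)
  qed
  have T2: "(\<Prod>i\<in>{N..<N+q}. A' i) \<le> 2 * (1 - p) ^ q"
  proof -
    have "(1 - p) ^ q * (1 + d1) ^ q \<le> (1 - p) ^ q * 2" using pb3 pq by (rule mult_left_mono)
    then show ?thesis using tu by (simp add: power_mult_distrib)
  qed
  have T0: "0 \<le> (1 - p) ^ q / 2" using pq by simp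
  have P0: "0 \<le> (\<Prod>i<N. A i) / 2" using Apos by simp
  show "1/4 * (1 - p) ^ q * (\<Prod>i<N. A i) \<le> (\<Prod>i<N + q. A' i)"
  proof -
    have "((\<Prod>i<N. A i) / 2) * ((1 - p) ^ q / 2) \<le> (\<Prod>i<N. A' i) * (\<Prod>i\<in>{N..<N+q}. A' i)"
      using P1 T1 P0 T0 by (intro mult_mono) auto
    then show ?thesis unfolding split by (simp add: algebra_simps)
  qed
  show "(\<Prod>i<N + q. A' i) \<le> 4 * (1 - p) ^ q * (\<Prod>i<N. A i)"
  proof -
    have "0 \<le> (\<Prod>i<N. A' i)" using P1 P0 by linarith
    then have "(\<Prod>i<N. A' i) * (\<Prod>i\<in>{N..<N+q}. A' i) \<le> (2 * (\<Prod>i<N. A i)) * (2 * (1 - p) ^ q)"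
      using P2 T2 pq T1 T0 by (intro mult_mono) auto
    then show ?thesis unfolding split by (simp add: algebra_simps)
  qed
qed




lemma real_choose2: "real (n choose 2) = real n * (real n - 1) / 2"
proof -
  have "real (2 * (n choose 2)) = real (n * (n - 1))" by (simp only: two_choose2)
  also have "\<dots> = real n * (real n - 1)" by (cases n) (auto simp: algebra_simps)
  finally have "2 * real (n choose 2) = real n * (real n - 1)" by simp
  then show ?thesis by simp
qed

lemma m_edges_bounds:
  assumes "0 \<le> p"
  shows "real (m_edges p n) \<le> p * real (n choose 2)" "p * real (n choose 2) - 1 \<le> real (m_edges p n)"
proof -
  have nn: "0 \<le> p * real (n choose 2)" using assms by simp
  then have "real (m_edges p n) = of_int \<lfloor>p * real (n choose 2)\<rfloor>" unfolding m_edges_def by simp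
  then show "real (m_edges p n) \<le> p * real (n choose 2)" "p * real (n choose 2) - 1 \<le> real (m_edges p n)"
    by linarith+
qed

lemma fits:
  fixes p n M M' m m' :: real and N q :: nat
  assumes p0: "0 < p" and p1: "p < 1" and n2: "2 \<le> n"
    and MM: "M = n * (n - 1) / 2" and MM': "M' = M + n"
    and m1: "m \<le> p * M" and m1': "m' \<le> p * M'"
    and hN: "2 * real N \<le> n * (real q + 1)"
    and hq: "28 * (real q + 1)^2 \<le> (1 - p) * n"
  shows "real N + m \<le> M" "real N + real q + m' \<le> M'"
proof -
  define Q where "Q = real q + 1"
  have Q1: "1 \<le> Q" unfolding Q_def by simp
  have "Q \<le> Q^2" using Q1 by (simp add: power2_eq_square)
  moreover have hq': "28 * Q^2 \<le> (1 - p) * n" using hq unfolding Q_def .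
  ultimately have h1: "28 * Q \<le> (1 - p) * n" by linarith
  have a: "n * (28 * Q) \<le> n * ((1 - p) * n)" by (rule mult_left_mono[OF h1]) (use n2 in simp)
  have e: "(1 - p) * M = (1 - p) * n * n / 2 - (1 - p) * n / 2" unfolding MM by (simp add: field_simps)
  have e': "(1 - p) * M' = (1 - p) * n * n / 2 + (1 - p) * n / 2" unfolding MM' MM by (simp add: field_simps)
  have b: "n * Q \<le> (1 - p) * n * n / 28" using a by (simp add: algebra_simps)
  have c: "28 * Q \<le> (1 - p) * n" using h1 .
  have Qn: "0 \<le> n * Q" using n2 Q1 by simp
  have pM: "p * M + (1 - p) * M = M" by (simp add: algebra_simps)
  have pM': "p * M' + (1 - p) * M' = M'" by (simp add: algebra_simps)
  have "real q \<le> n * Q / 2"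
  proof -
    have "2 * Q \<le> n * Q" using n2 Q1 by (intro mult_right_mono) auto
    then show ?thesis unfolding Q_def by simp
  qed
  moreover have "(1 - p) * n * 2 \<le> (1 - p) * n * n" using n2 p1 by (intro mult_left_mono) auto
  moreover have "0 \<le> (1 - p) * n" using n2 p1 by simp
  ultimately show "real N + m \<le> M" "real N + real q + m' \<le> M'"
    using hN m1 m1' e e' b c pM pM' Qn Q1 unfolding Q_def[symmetric] by linarith+
qed



lemma main_n:
  fixes p :: real and n K :: nat
  assumes p0: "0 < p" and p1: "p < 1" and K: "0 < K" and n2: "2 \<le> n"
    and hq: "28 * (real (n div K) + 1)^2 \<le> (1 - p) * real n"
  shows "0 < mu p n K"
    and "1/4 * (1 - p) ^ (n div K) * (real (Suc n) / real (n div K + 1)) \<le> mu p (Suc n) K / mu p n K"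
    and "mu p (Suc n) K / mu p n K \<le> 4 * (1 - p) ^ (n div K) * (real (Suc n) / real (n div K + 1))"
proof -
  define q where "q = n div K"
  define M where "M = n choose 2"
  define M' where "M' = Suc n choose 2"
  define N where "N = NN n K"
  define m where "m = m_edges p n"
  define m' where "m' = m_edges p (Suc n)"
  have N': "NN (Suc n) K = N + q" unfolding N_def q_def by (rule NN_Suc[OF K])
  have rM: "real M = real n * (real n - 1) / 2" unfolding M_def by (rule real_choose2)
  have rM': "real M' = real M + real n" unfolding M'_def M_def by (simp add: choose2_Suc)
  have rn2: "2 \<le> real n" using n2 by simp
  have mb: "real m \<le> p * real M" "p * real M - 1 \<le> real m"
    unfolding m_def M_def using m_edges_bounds[of p n] p0 by auto
  have mb': "real m' \<le> p * real M'" "p * real M' - 1 \<le> real m'"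
    unfolding m'_def M'_def using m_edges_bounds[of p "Suc n"] p0 by auto
  have hN: "2 * real N \<le> real n * (real q + 1)"
  proof -
    have "2 * N \<le> n * q" unfolding N_def q_def by (rule NN_bound[OF K])
    then have "2 * real N \<le> real n * real q" by (metis of_nat_le_iff of_nat_mult of_nat_numeral)
    also have "\<dots> \<le> real n * (real q + 1)" by (simp add: algebra_simps)
    finally show ?thesis .
  qed
  have hq': "28 * (real q + 1)^2 \<le> (1 - p) * real n" using hq unfolding q_def .
  note ft = fits[OF p0 p1 rn2 rM rM' mb(1) mb'(1) hN hq']
  have f1: "N + m \<le> M" using ft(1) by linarith
  have f2: "(N + q) + m' \<le> M'" using ft(2) by linarith
  define Hp where "Hp = real ((M - N) choose m) / real (M choose m)"
  define Hp' where "Hp' = real ((M' - (N + q)) choose m') / real (M' choose m')"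
  have Hp_eq: "Hp = (\<Prod>i<N. (real M - real m - real i) / (real M - real i))"
    unfolding Hp_def by (rule binom_prod[OF f1])
  have Hp'_eq: "Hp' = (\<Prod>i<N + q. (real M' - real m' - real i) / (real M' - real i))"
    unfolding Hp'_def by (rule binom_prod[OF f2])
  note rc = ratio_core[OF p0 p1 rn2 rM rM' mb _ mb' hN hq']
  have Hpos: "0 < Hp" using rc(1) Hp_eq by simp
  have Hlow: "1/4 * (1 - p) ^ q * Hp \<le> Hp'" using rc(2) Hp_eq Hp'_eq by simp
  have Hup: "Hp' \<le> 4 * (1 - p) ^ q * Hp" using rc(3) Hp_eq Hp'_eq by simp
  have mu1: "mu p n K = real (card (equipartitions n K)) * Hp"
    unfolding Hp_def using mu_formula[OF _ _ K, of p n] p0 p1 unfolding M_def N_def m_def by simp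
  have mu2: "mu p (Suc n) K = real (card (equipartitions (Suc n) K)) * Hp'"
    unfolding Hp'_def using mu_formula[OF _ _ K, of p "Suc n"] p0 p1 N' unfolding M'_def N_def m'_def by simp
  define E where "E = real (card (equipartitions n K))"
  define E' where "E' = real (card (equipartitions (Suc n) K))"
  have Epos: "0 < E" unfolding E_def using EP_pos[OF K] by simp
  have EE: "E' * (real q + 1) = E * real (Suc n)"
  proof -
    have "card (equipartitions (Suc n) K) * (n div K + 1) = card (equipartitions n K) * Suc n"
      by (rule EP_ratio[OF K])
    then have "real (card (equipartitions (Suc n) K) * (n div K + 1)) = real (card (equipartitions n K) * Suc n)"
      by simp
    then show ?thesis unfolding E_def E'_def q_def by (simp add: algebra_simps)
  qed
  have ratio: "mu p (Suc n) K / mu p n K = (real (Suc n) / real (q + 1)) * (Hp' / Hp)"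
  proof -
    have r1: "E' / E = real (Suc n) / real (q + 1)" using EE Epos by (simp add: field_simps)
    have "mu p (Suc n) K / mu p n K = (E' * Hp') / (E * Hp)"
      unfolding mu1 mu2 E_def[symmetric] E'_def[symmetric] ..
    also have "\<dots> = (E' / E) * (Hp' / Hp)" by simp
    finally show ?thesis unfolding r1 .
  qed
  show "0 < mu p n K" unfolding mu1 E_def[symmetric] using Epos Hpos by simp
  have rpos: "0 \<le> real (Suc n) / real (q + 1)" by simp
  have lowf: "1/4 * (1 - p) ^ q \<le> Hp' / Hp" using Hlow Hpos by (simp add: field_simps)
  show "1/4 * (1 - p) ^ (n div K) * (real (Suc n) / real (n div K + 1)) \<le> mu p (Suc n) K / mu p n K"
    unfolding ratio q_def[symmetric] using mult_right_mono[OF lowf rpos] by (simp add: mult_ac)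
  have upf: "Hp' / Hp \<le> 4 * (1 - p) ^ q" using Hup Hpos by (simp add: field_simps)
  show "mu p (Suc n) K / mu p n K \<le> 4 * (1 - p) ^ (n div K) * (real (Suc n) / real (n div K + 1))"
    unfolding ratio q_def[symmetric] using mult_right_mono[OF upf rpos] by (simp add: mult_ac)
qed



lemma exp2: "exp (2 * x) = exp (x::real) ^ 2"
  using exp_of_nat_mult[of 2 x] by simp

lemma exp_gamma:
  fixes c n L G :: real
  assumes c: "0 < c" and n: "0 < n" and L: "L = ln n / c" "0 < L"
    and G: "G = 2 * L - 2 * (ln L / c) - 2 * (ln 2 / c)"
  shows "exp (- c * G) = 4 * L^2 / n^2"
proof -
  have "- c * G = 2 * ln L + 2 * ln 2 - 2 * ln n" unfolding G L(1) using c by (simp add: field_simps)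
  then have "exp (- c * G) = exp (2 * ln L) * exp (2 * ln 2) / exp (2 * ln n)"
    by (simp add: exp_add exp_diff)
  also have "\<dots> = L^2 * 4 / n^2" unfolding exp2 using L(2) n by simp
  finally show ?thesis by simp
qed

lemma final_up:
  fixes R P r e1 E L n :: real
  assumes "R \<le> 4 * P * r" "0 \<le> P" "P \<le> e1 * E" "0 \<le> r" "r \<le> 2 * (n + 1) / L"
    and "E = 4 * L^2 / n^2" "0 < L" "2 \<le> n" "0 \<le> e1"
  shows "R \<le> 64 * e1 * L / n"
proof -
  have "4 * P * r \<le> 4 * (e1 * E) * (2 * (n + 1) / L)"
    using assms by (intro mult_mono) auto
  also have "\<dots> = 32 * e1 * L * (n + 1) / n^2" using assms(7,8) unfolding assms(6) by (simp add: field_simps power2_eq_square)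
  also have "\<dots> \<le> 32 * e1 * L * (2 * n) / n^2"
    using assms by (intro divide_right_mono mult_left_mono) auto
  also have "\<dots> = 64 * e1 * L / n" using assms by (simp add: field_simps power2_eq_square)
  finally show ?thesis using assms(1) by linarith
qed

lemma final_low:
  fixes R P r e0 E L n :: real
  assumes "1/4 * P * r \<le> R" "e0 * E \<le> P" "(n + 1) / (3 * L) \<le> r"
    and "E = 4 * L^2 / n^2" "0 < L" "2 \<le> n" "0 \<le> e0"
  shows "e0 * L / (3 * n) \<le> R"
proof -
  have "e0 * L / (3 * n) \<le> e0 * L * (n + 1) / (3 * n^2)"
    using assms by (simp add: field_simps power2_eq_square)
  also have "\<dots> = 1/4 * (e0 * E) * ((n + 1) / (3 * L))" using assms(5,6) unfolding assms(4) by (simp add: field_simps power2_eq_square)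
  also have "\<dots> \<le> 1/4 * P * r"
  proof -
    have "0 \<le> e0 * E" using assms(4-7) by simp
    then have "0 \<le> P" using assms(2) by linarith
    moreover have "0 \<le> (n + 1) / (3 * L)" using assms(5,6) by simp
    ultimately show ?thesis using assms by (intro mult_mono mult_left_mono) auto
  qed
  finally show ?thesis using assms(1) by linarith
qed



theorem lemma4:
  fixes p :: real and k :: "nat \<Rightarrow> nat"
  assumes "0 < p" and "p < 1 - 1 / exp 2"
    and "\<And>n. 0 < k n"
    and "(\<lambda>n. real n / real (k n) - gamma_fn p n) \<in> O(\<lambda>_. 1)"
  shows "(\<lambda>n. mu p (n + 1) (k n) / mu p n (k n)) \<in> \<Theta>(\<lambda>n. ln (real n) / real n)"
proof -
  have p0: "0 < p" using assms(1) .
  have "0 < 1 / exp (2::real)" by simp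
  then have p1: "p < 1" using assms(2) by linarith
  define c where "c = ln (1 / (1 - p))"
  have c_alt: "c = - ln (1 - p)" unfolding c_def using p1 by (simp add: ln_div)
  have c0: "0 < c" unfolding c_alt using p0 p1 by simp
  have gam: "gamma_fn p n = 2 * (ln (real n) / c) - 2 * (ln (ln (real n) / c) / c) - 2 * (ln 2 / c)" for n
    unfolding gamma_fn_def Let_def log_def c_def by simp
  from assms(4) obtain B where B0: "B > 0"
    and evB0: "eventually (\<lambda>n. norm (real n / real (k n) - gamma_fn p n) \<le> B * norm ((\<lambda>_. 1::real) n)) at_top"
    by (elim landau_o.bigE)
  have evB: "eventually (\<lambda>n. \<bar>real n / real (k n) - gamma_fn p n\<bar> \<le> B) at_top"
    using evB0 by simp
  have ev1: "eventually (\<lambda>n::nat. 2 \<le> n) at_top" by (rule eventually_ge_at_top)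
  have ev3: "eventually (\<lambda>n::nat. B + 1 \<le> ln (real n) / c) at_top" using c0 by real_asymp
  have ev4: "eventually (\<lambda>n::nat. 3/2 * (ln (real n) / c) - 2 * (ln (ln (real n) / c) / c) - 2 * (ln 2 / c) - B \<ge> 0) at_top"
    using c0 by real_asymp
  have pp: "0 < 1 - p" using p1 by simp
  have ev5: "eventually (\<lambda>n::nat. 28 * (2 * (ln (real n) / c) + B + 1)^2 \<le> (1 - p) * real n) at_top"
    using c0 pp by real_asymp
  define e1 where "e1 = exp (c * (B + 1))"
  define e0 where "e0 = exp (- c * B)"
  have e1pos: "0 < e1" unfolding e1_def by simp
  have e0pos: "0 < e0" unfolding e0_def by simp
  have main: "eventually (\<lambda>n. e0 / (3 * c) * \<bar>ln (real n) / real n\<bar> \<le> \<bar>mu p (n + 1) (k n) / mu p n (k n)\<bar>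
      \<and> \<bar>mu p (n + 1) (k n) / mu p n (k n)\<bar> \<le> 64 * e1 / c * \<bar>ln (real n) / real n\<bar>) at_top"
    using ev1 evB ev3 ev4 ev5
  proof eventually_elim
    case (elim n)
    define K where "K = k n"
    have K: "0 < K" unfolding K_def by (rule assms(3))
    define q where "q = n div K"
    define x where "x = real n / real K"
    define L where "L = ln (real n) / c"
    define G where "G = gamma_fn p n"
    have G_eq: "G = 2 * L - 2 * (ln L / c) - 2 * (ln 2 / c)" unfolding G_def L_def gam ..
    have n2: "2 \<le> real n" using elim(1) by simp
    have L1: "B + 1 \<le> L" using elim(3) unfolding L_def .
    have Lpos: "0 < L" using L1 B0 by linarith
    have xG: "\<bar>x - G\<bar> \<le> B" using elim(2) unfolding x_def G_def K_def .
    have fl: "\<lfloor>x\<rfloor> = int q" unfolding x_def q_def by (simp add: floor_divide_of_nat_eq)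
    have xq1: "real q \<le> x" "x < real q + 1" using fl by linarith+
    have G2: "G \<le> 2 * L"
    proof -
      have "0 \<le> ln L" using L1 B0 by simp
      then have "0 \<le> ln L / c" using c0 by simp
      moreover have "0 \<le> ln 2 / c" using c0 by simp
      ultimately show ?thesis unfolding G_eq by linarith
    qed
    have e4: "0 \<le> 3/2 * L - 2 * (ln L / c) - 2 * (ln 2 / c) - B" using elim(4) unfolding L_def .
    have GB: "L / 2 \<le> G - B" using e4 unfolding G_eq by linarith
    have q_up: "real q + 1 \<le> 2 * L + B + 1" using xq1 xG G2 by linarith
    have q_lo: "L / 2 \<le> real q + 1" using xq1 xG GB by linarith
    have hq: "28 * (real q + 1)^2 \<le> (1 - p) * real n"
    proof -
      have "(real q + 1)^2 \<le> (2 * L + B + 1)^2" using q_up by (intro power_mono) auto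
      then show ?thesis using elim(5) unfolding L_def by linarith
    qed
    note mn = main_n[OF p0 p1 K elim(1) hq[unfolded q_def]]
    define R where "R = mu p (Suc n) K / mu p n K"
    define P where "P = (1 - p) ^ q"
    define r where "r = real (Suc n) / real (q + 1)"
    have Rl: "1/4 * P * r \<le> R" using mn(2) unfolding R_def P_def r_def q_def by simp
    have Ru: "R \<le> 4 * P * r" using mn(3) unfolding R_def P_def r_def q_def by simp
    have P_exp: "P = exp (- c * real q)"
    proof -
      have "P = exp (ln (1 - p)) ^ q" unfolding P_def using pp by simp
      also have "\<dots> = exp (real q * ln (1 - p))" by (simp add: exp_of_nat_mult)
      finally show ?thesis unfolding c_alt by simp
    qed
    define E where "E = exp (- c * G)"
    have E_eq: "E = 4 * L^2 / (real n)^2"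
      unfolding E_def by (rule exp_gamma[OF c0 _ L_def Lpos G_eq]) (use n2 in simp)
    have P_up: "P \<le> e1 * E"
    proof -
      have "G - B - 1 \<le> real q" using xq1 xG by linarith
      then have "c * (G - B - 1) \<le> c * real q" using c0 by (intro mult_left_mono) auto
      then have "- c * real q \<le> c * (B + 1) + (- c * G)" by (simp add: algebra_simps)
      then have "exp (- c * real q) \<le> exp (c * (B + 1) + (- c * G))" by (simp only: exp_le_cancel_iff)
      moreover have "exp (c * (B + 1) + (- c * G)) = e1 * E" unfolding e1_def E_def by (rule exp_add)
      ultimately show ?thesis unfolding P_exp by linarith
    qed
    have P_lo: "e0 * E \<le> P"
    proof -
      have "real q \<le> G + B" using xq1 xG by linarith
      then have "c * real q \<le> c * (G + B)" using c0 by (intro mult_left_mono) auto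
      then have "- c * B + (- c * G) \<le> - c * real q" by (simp add: algebra_simps)
      then have "exp (- c * B + (- c * G)) \<le> exp (- c * real q)" by (simp only: exp_le_cancel_iff)
      moreover have "exp (- c * B + (- c * G)) = e0 * E" unfolding e0_def E_def by (rule exp_add)
      ultimately show ?thesis unfolding P_exp by linarith
    qed
    have P0: "0 \<le> P" unfolding P_def using pp by simp
    have r0: "0 \<le> r" unfolding r_def by simp
    have r_up: "r \<le> 2 * (real n + 1) / L"
    proof -
      have "r = (real n + 1) / (real q + 1)" unfolding r_def by (simp add: add.commute)
      also have "\<dots> \<le> (real n + 1) / (L / 2)" using q_lo Lpos by (intro divide_left_mono) auto
      also have "\<dots> = 2 * (real n + 1) / L" by simp
      finally show ?thesis .
    qed
    have r_lo: "(real n + 1) / (3 * L) \<le> r"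
    proof -
      have "real q + 1 \<le> 3 * L" using q_up L1 by linarith
      then have "(real n + 1) / (3 * L) \<le> (real n + 1) / (real q + 1)" by (intro divide_left_mono) auto
      then show ?thesis unfolding r_def by (simp add: add.commute)
    qed
    have up: "R \<le> 64 * e1 * L / real n"
      by (rule final_up[OF Ru P0 P_up r0 r_up E_eq Lpos n2]) (use e1pos in simp)
    have lo: "e0 * L / (3 * real n) \<le> R"
      by (rule final_low[OF Rl P_lo r_lo E_eq Lpos n2]) (use e0pos in simp)
    have lnpos: "0 \<le> ln (real n) / real n" using n2 by simp
    have eq1: "64 * e1 * L / real n = 64 * e1 / c * (ln (real n) / real n)" unfolding L_def by simp
    have eq2: "e0 * L / (3 * real n) = e0 / (3 * c) * (ln (real n) / real n)" unfolding L_def by simp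
    have "0 \<le> e0 * L / (3 * real n)" using e0pos Lpos n2 by simp
    then have R0: "0 \<le> R" using lo by linarith
    have Req: "mu p (n + 1) (k n) / mu p n (k n) = R" unfolding R_def K_def by simp
    show ?case unfolding Req abs_of_nonneg[OF R0] abs_of_nonneg[OF lnpos] using up lo eq1 eq2 by linarith
  qed
  show ?thesis
  proof (rule bigthetaI'[of "e0 / (3 * c)" "64 * e1 / c"])
    show "0 < e0 / (3 * c)" using e0pos c0 by simp
    show "0 < 64 * e1 / c" using e1pos c0 by simp
    show "eventually (\<lambda>x. e0 / (3 * c) * norm (ln (real x) / real x) \<le> norm (mu p (x + 1) (k x) / mu p x (k x)) \<and>
        norm (mu p (x + 1) (k x) / mu p x (k x)) \<le> 64 * e1 / c * norm (ln (real x) / real x)) at_top"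
      using main unfolding real_norm_def .
  qed
qed


end
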